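(* Let $H$ be a real or complex Hilbert space of dimension $n$, let $N\ge \max(n,2)$, let $F=\{f_i\}_{i=1}^N$ be a frame for $H$, and let $\{q_i\}_{i=1}^N$ be a weight number sequence. Let $G=\{g_i\}_{i=1}^N$ be a dual of $F$ satisfying: (i) $\langle g_i,f_i\rangle\ge 0$ for all $1\le i\le N$; (ii) there is a constant $c>0$ with $q_iq_j\langle g_j,f_i\rangle\langle g_i,f_j\rangle=c$ for all $i\ne j$. Let $\zeta=\{i: q_i\langle g_i,f_i\rangle=\mathcal{R}_1^p(F,G)\}$. If $|\zeta|=1$, then $$\mathcal{R}_2^p(F,G)=\frac12\Big\{\mathcal{R}_1^p(F,G)+\max_{i\notin\zeta}q_i\langle g_i,f_i\rangle+\sqrt{\big(\mathcal{R}_1^p(F,G)-\max_{i\notin\zeta}q_i\langle g_i,f_i\rangle\big)^2+4c}\Big\}.$$ If $|\zeta|>1$, then $\mathcal{R}_2^p(F,G)=\mathcal{R}_1^p(F,G)+\sqrt{c}$.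
   Context: Inner products are linear in the first argument. A frame for $H$ is a finite sequence spanning $H$. Analysis operator: $\Theta_F f=(\langle f,f_i\rangle)_i$. Synthesis operator: $\Theta_G^*(c)=\sum_i c_ig_i$. A dual of $F$ is a frame $G$ with $f=\sum_i\langle f,f_i\rangle g_i=\sum_i\langle f,g_i\rangle f_i$ for all $f$. A probability sequence satisfies $0\le p_i\le 1$ and $\sum p_i=1$. Weight numbers: $q_i=\frac{\sum_j p_j}{\sum_j p_j-p_i}\cdot\frac{N-1}{n}$ (assumed well defined). For $m\in\{1,2\}$, $\mathcal{D}_m^p$ is the set of $N\times N$ diagonal matrices $D$ for which there is $\Lambda\subseteq\{1,\dots,N\}$ with $|\Lambda|=m$, $D_{ii}=q_i$ for $i\in\Lambda$ and $D_{ii}=0$ otherwise. $\mathcal{R}_m^p(F,G)=\max\{\rho(\Theta_G^*D\Theta_F):D\in\mathcal{D}_m^p\}$, with $\rho$ the spectral radius. *)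

theory Defs
  imports "Jordan_Normal_Form.Spectral_Radius"
begin

(* Vectors of the n-dimensional Hilbert space H = C^n are complex vecs of dimension n.
   Frames / sequences are indexed by i < N (i.e. i = 0..N-1). *)

definition cinner :: "complex vec \<Rightarrow> complex vec \<Rightarrow> complex" where
  "cinner x y = (\<Sum>r<dim_vec x. x $ r * cnj (y $ r))"

definition is_frame :: "nat \<Rightarrow> nat \<Rightarrow> (nat \<Rightarrow> complex vec) \<Rightarrow> bool" where
  "is_frame n N f \<longleftrightarrow> (\<forall>i<N. f i \<in> carrier_vec n) \<and>
     (\<forall>x\<in>carrier_vec n. \<exists>a::nat \<Rightarrow> complex. x = vec n (\<lambda>r. \<Sum>i<N. a i * f i $ r))"

definition is_dual :: "nat \<Rightarrow> nat \<Rightarrow> (nat \<Rightarrow> complex vec) \<Rightarrow> (nat \<Rightarrow> complex vec) \<Rightarrow> bool" where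
  "is_dual n N f g \<longleftrightarrow> is_frame n N g \<and>
     (\<forall>x\<in>carrier_vec n.
        x = vec n (\<lambda>r. \<Sum>i<N. cinner x (f i) * g i $ r) \<and>
        x = vec n (\<lambda>r. \<Sum>i<N. cinner x (g i) * f i $ r))"

definition analysis_op :: "nat \<Rightarrow> nat \<Rightarrow> (nat \<Rightarrow> complex vec) \<Rightarrow> complex mat" where
  "analysis_op n N f = mat N n (\<lambda>(i, r). cnj (f i $ r))"

definition synthesis_op :: "nat \<Rightarrow> nat \<Rightarrow> (nat \<Rightarrow> complex vec) \<Rightarrow> complex mat" where
  "synthesis_op n N g = mat n N (\<lambda>(r, i). g i $ r)"

definition prob_seq :: "nat \<Rightarrow> (nat \<Rightarrow> real) \<Rightarrow> bool" where
  "prob_seq N p \<longleftrightarrow> (\<forall>i<N. 0 \<le> p i \<and> p i \<le> 1) \<and> (\<Sum>i<N. p i) = 1"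

definition weight_numbers :: "nat \<Rightarrow> nat \<Rightarrow> (nat \<Rightarrow> real) \<Rightarrow> bool" where
  "weight_numbers n N q \<longleftrightarrow> n \<noteq> 0 \<and> (\<exists>p. prob_seq N p \<and>
     (\<forall>i<N. (\<Sum>j<N. p j) - p i \<noteq> 0 \<and>
        q i = (\<Sum>j<N. p j) / ((\<Sum>j<N. p j) - p i) * (real N - 1) / real n))"

definition Dset :: "nat \<Rightarrow> (nat \<Rightarrow> real) \<Rightarrow> nat \<Rightarrow> complex mat set" where
  "Dset N q m = {mat N N (\<lambda>(i, j). if i = j \<and> i \<in> \<Lambda> then complex_of_real (q i) else 0)
                 | \<Lambda>. \<Lambda> \<subseteq> {..<N} \<and> card \<Lambda> = m}"

definition Rmp :: "nat \<Rightarrow> nat \<Rightarrow> (nat \<Rightarrow> real) \<Rightarrow> nat \<Rightarrow> (nat \<Rightarrow> complex vec) \<Rightarrow> (nat \<Rightarrow> complex vec) \<Rightarrow> real" where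
  "Rmp n N q m f g = Max {spectral_radius (synthesis_op n N g * D * analysis_op n N f) | D. D \<in> Dset N q m}"

end

theory Submission
  imports Defs
begin


definition Dm :: "nat \<Rightarrow> (nat \<Rightarrow> real) \<Rightarrow> nat set \<Rightarrow> complex mat" where
  "Dm N q L = mat N N (\<lambda>(i, j). if i = j \<and> i \<in> L then complex_of_real (q i) else 0)"

lemma sum_delta_mult:
  fixes a :: "'b::comm_semiring_1"
  assumes "i \<in> A" "finite A"
  shows "(\<Sum>j\<in>A. (if i = j then a else 0) * h j) = a * h i"
proof -
  have "(\<Sum>j\<in>A. (if i = j then a else 0) * h j) = (\<Sum>j\<in>A. if i = j then a * h i else 0)"
    by (rule sum.cong) auto
  thus ?thesis using assms by simp
qed

lemma T_apply:
  assumes f: "\<forall>i<N. f i \<in> carrier_vec n" and g: "\<forall>i<N. g i \<in> carrier_vec n"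
    and L: "L \<subseteq> {..<N}" and x: "x \<in> carrier_vec n"
  shows "(synthesis_op n N g * Dm N q L * analysis_op n N f) *\<^sub>v x =
     vec n (\<lambda>r. \<Sum>i\<in>L. complex_of_real (q i) * cinner x (f i) * g i $ r)"
proof -
  have S: "synthesis_op n N g \<in> carrier_mat n N" by (simp add: synthesis_op_def)
  have D: "Dm N q L \<in> carrier_mat N N" by (simp add: Dm_def)
  have A: "analysis_op n N f \<in> carrier_mat N n" by (simp add: analysis_op_def)
  have 1: "analysis_op n N f *\<^sub>v x = vec N (\<lambda>i. cinner x (f i))"
  proof (rule eq_vecI)
    fix i assume "i < dim_vec (vec N (\<lambda>i. cinner x (f i)))"
    hence i: "i < N" by simp
    have "dim_vec (f i) = n" using f i by auto
    thus "(analysis_op n N f *\<^sub>v x) $ i = vec N (\<lambda>i. cinner x (f i)) $ i"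
      using i x by (auto simp: analysis_op_def cinner_def scalar_prod_def lessThan_atLeast0 mult.commute intro!: sum.cong)
  qed (simp add: analysis_op_def)
  have 2: "Dm N q L *\<^sub>v vec N (\<lambda>i. cinner x (f i)) = vec N (\<lambda>i. if i \<in> L then complex_of_real (q i) * cinner x (f i) else 0)"
  proof (rule eq_vecI)
    fix i assume "i < dim_vec (vec N (\<lambda>i. if i \<in> L then complex_of_real (q i) * cinner x (f i) else 0))"
    hence i: "i < N" by simp
    show "(Dm N q L *\<^sub>v vec N (\<lambda>i. cinner x (f i))) $ i = vec N (\<lambda>i. if i \<in> L then complex_of_real (q i) * cinner x (f i) else 0) $ i"
      using i by (simp add: Dm_def scalar_prod_def row_def, subst sum_delta_mult, auto)
  qed (simp add: Dm_def)
  have 3: "synthesis_op n N g *\<^sub>v vec N (\<lambda>i. if i \<in> L then complex_of_real (q i) * cinner x (f i) else 0)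
     = vec n (\<lambda>r. \<Sum>i\<in>L. complex_of_real (q i) * cinner x (f i) * g i $ r)"
  proof (rule eq_vecI)
    fix r assume "r < dim_vec (vec n (\<lambda>r. \<Sum>i\<in>L. complex_of_real (q i) * cinner x (f i) * g i $ r))"
    hence r: "r < n" by simp
    have "(synthesis_op n N g *\<^sub>v vec N (\<lambda>i. if i \<in> L then complex_of_real (q i) * cinner x (f i) else 0)) $ r
       = (\<Sum>i\<in>{..<N}. if i \<in> L then complex_of_real (q i) * cinner x (f i) * g i $ r else 0)"
      using r by (auto simp: synthesis_op_def scalar_prod_def lessThan_atLeast0 mult.commute intro!: sum.cong)
    also have "\<dots> = (\<Sum>i\<in>L. complex_of_real (q i) * cinner x (f i) * g i $ r)"
      using L by (simp add: sum.If_cases Int_absorb1)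
    finally show "(synthesis_op n N g *\<^sub>v vec N (\<lambda>i. if i \<in> L then complex_of_real (q i) * cinner x (f i) else 0)) $ r
       = vec n (\<lambda>r. \<Sum>i\<in>L. complex_of_real (q i) * cinner x (f i) * g i $ r) $ r" using r by simp
  qed (simp add: synthesis_op_def)
  have "(synthesis_op n N g * Dm N q L * analysis_op n N f) *\<^sub>v x
     = synthesis_op n N g *\<^sub>v (Dm N q L *\<^sub>v (analysis_op n N f *\<^sub>v x))"
  proof -
    have SD: "synthesis_op n N g * Dm N q L \<in> carrier_mat n N" using S D by simp
    have "(synthesis_op n N g * Dm N q L * analysis_op n N f) *\<^sub>v x
       = (synthesis_op n N g * Dm N q L) *\<^sub>v (analysis_op n N f *\<^sub>v x)"
      by (rule assoc_mult_mat_vec[OF SD A x])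
    also have "\<dots> = synthesis_op n N g *\<^sub>v (Dm N q L *\<^sub>v (analysis_op n N f *\<^sub>v x))"
      by (rule assoc_mult_mat_vec[OF S D]) (use A x in simp)
    finally show ?thesis .
  qed
  thus ?thesis using 1 2 3 by simp
qed


lemma cinner_smult: "cinner (a \<cdot>\<^sub>v x) y = a * cinner x y"
  by (simp add: cinner_def sum_distrib_left mult.assoc)

lemma cinner_add: "x \<in> carrier_vec n \<Longrightarrow> z \<in> carrier_vec n \<Longrightarrow> cinner (x + z) y = cinner x y + cinner z y"
  by (simp add: cinner_def sum.distrib distrib_right)

lemma cinner_zero: "cinner (0\<^sub>v n) y = 0"
  by (simp add: cinner_def)

lemma smult_zero_imp: "(l::complex) \<noteq> 0 \<Longrightarrow> v \<in> carrier_vec n \<Longrightarrow> l \<cdot>\<^sub>v v = 0\<^sub>v n \<Longrightarrow> v = 0\<^sub>v n"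
proof -
  assume l: "l \<noteq> 0" and v: "v \<in> carrier_vec n" and e: "l \<cdot>\<^sub>v v = 0\<^sub>v n"
  show "v = 0\<^sub>v n"
  proof (rule eq_vecI)
    fix r assume "r < dim_vec (0\<^sub>v n :: complex vec)"
    hence r: "r < n" by simp
    have "(l \<cdot>\<^sub>v v) $ r = 0" using e r by simp
    thus "v $ r = 0\<^sub>v n $ r" using l r v by simp
  qed (use v in simp)
qed

lemma sr_eq:
  assumes T: "T \<in> carrier_mat n n" and n: "n > 0" and r: "r \<ge> 0"
    and ev: "r = 0 \<or> eigenvalue T (complex_of_real r)"
    and bd: "\<And>l. eigenvalue T l \<Longrightarrow> l \<noteq> 0 \<Longrightarrow> cmod l \<le> r"
  shows "spectral_radius T = r"
proof -
  from spectral_radius_mem_max(1)[OF T n] obtain l where l: "l \<in> spectrum T" "spectral_radius T = cmod l" by auto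
  have le: "spectral_radius T \<le> r"
    using l bd[of l] r by (cases "l = 0") (auto simp: spectrum_def)
  have ge: "r \<le> spectral_radius T"
  proof (cases "r = 0")
    case True thus ?thesis using l by simp
  next
    case False
    hence "complex_of_real r \<in> spectrum T" using ev by (simp add: spectrum_def)
    from spectral_radius_mem_max(2)[OF T n imageI[OF this]] show ?thesis using r by simp
  qed
  show ?thesis using le ge by simp
qed


lemma T_apply1:
  assumes f: "\<forall>i<N. f i \<in> carrier_vec n" and g: "\<forall>i<N. g i \<in> carrier_vec n"
    and i: "i < N" and x: "x \<in> carrier_vec n"
  shows "(synthesis_op n N g * Dm N q {i} * analysis_op n N f) *\<^sub>v x =
     (complex_of_real (q i) * cinner x (f i)) \<cdot>\<^sub>v g i"
proof -
  have "{i} \<subseteq> {..<N}" using i by auto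
  from T_apply[OF f g this x, of q] show ?thesis using g i
    by (auto intro!: eq_vecI)
qed

lemma T_apply2:
  assumes f: "\<forall>i<N. f i \<in> carrier_vec n" and g: "\<forall>i<N. g i \<in> carrier_vec n"
    and i: "i < N" and j: "j < N" and ij: "i \<noteq> j" and x: "x \<in> carrier_vec n"
  shows "(synthesis_op n N g * Dm N q {i, j} * analysis_op n N f) *\<^sub>v x =
     (complex_of_real (q i) * cinner x (f i)) \<cdot>\<^sub>v g i + (complex_of_real (q j) * cinner x (f j)) \<cdot>\<^sub>v g j"
proof -
  have L: "{i, j} \<subseteq> {..<N}" using i j by auto
  have gi: "g i \<in> carrier_vec n" and gj: "g j \<in> carrier_vec n" using g i j by auto
  from T_apply[OF f g L x, of q] show ?thesis using gi gj ij
    by (intro eq_vecI) auto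
qed

lemma T_carrier: "synthesis_op n N g * Dm N q L * analysis_op n N f \<in> carrier_mat n n"
  unfolding synthesis_op_def analysis_op_def Dm_def
  by (rule mult_carrier_mat[of _ n N], rule mult_carrier_mat[of _ n N]) auto


lemma rad1:
  assumes f: "\<forall>i<N. f i \<in> carrier_vec n" and g: "\<forall>i<N. g i \<in> carrier_vec n"
    and i: "i < N" and n: "n > 0" and a: "cinner (g i) (f i) = complex_of_real a" and a0: "a \<ge> 0"
    and qi: "q i > 0"
  shows "spectral_radius (synthesis_op n N g * Dm N q {i} * analysis_op n N f) = q i * a"
proof (rule sr_eq[OF T_carrier n])
  let ?T = "synthesis_op n N g * Dm N q {i} * analysis_op n N f"
  have gi: "g i \<in> carrier_vec n" and fi: "f i \<in> carrier_vec n" using f g i by auto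
  show "q i * a \<ge> 0" using a0 qi by simp
  show "q i * a = 0 \<or> eigenvalue ?T (complex_of_real (q i * a))"
  proof (cases "a = 0")
    case False
    have "g i \<noteq> 0\<^sub>v n" using a False by (auto simp: cinner_zero)
    moreover have "?T *\<^sub>v g i = complex_of_real (q i * a) \<cdot>\<^sub>v g i"
      using T_apply1[OF f g i gi] a by simp
    ultimately have "eigenvector ?T (g i) (complex_of_real (q i * a))"
      using gi T_carrier[of n N g q "{i}" f] unfolding eigenvector_def by auto
    thus ?thesis unfolding eigenvalue_def by blast
  qed simp
  fix l assume ev: "eigenvalue ?T l" and l0: "l \<noteq> 0"
  then obtain v where v: "v \<in> carrier_vec n" "v \<noteq> 0\<^sub>v n" "?T *\<^sub>v v = l \<cdot>\<^sub>v v"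
    unfolding eigenvalue_def eigenvector_def using T_carrier[of n N g q "{i}" f] by auto
  have eq: "l \<cdot>\<^sub>v v = (complex_of_real (q i) * cinner v (f i)) \<cdot>\<^sub>v g i"
    using v(3) T_apply1[OF f g i v(1)] by simp
  have c0: "cinner v (f i) \<noteq> 0"
  proof
    assume "cinner v (f i) = 0"
    hence "l \<cdot>\<^sub>v v = 0\<^sub>v n" using eq gi by auto
    thus False using smult_zero_imp[OF l0 v(1)] v(2) by simp
  qed
  have "l * cinner v (f i) = complex_of_real (q i) * cinner v (f i) * complex_of_real a"
    using arg_cong[OF eq, of "\<lambda>w. cinner w (f i)"] by (simp add: cinner_smult a)
  hence "l = complex_of_real (q i * a)" using c0 by (simp add: mult.commute mult.left_commute)
  thus "cmod l \<le> q i * a" using a0 qi by (simp del: of_real_mult)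
qed


definition rho :: "real \<Rightarrow> real \<Rightarrow> real \<Rightarrow> real" where
  "rho c a b = (a + b + sqrt ((a - b)\<^sup>2 + 4 * c)) / 2"

lemma rho_root: assumes "c > 0" shows "(rho c a b - a) * (rho c a b - b) = c"
proof -
  let ?s = "sqrt ((a - b)\<^sup>2 + 4 * c)"
  have "0 \<le> (a - b)\<^sup>2" by simp
  have "0 \<le> (a - b)\<^sup>2 + 4 * c" using assms by (intro add_nonneg_nonneg) auto
  hence s: "?s ^ 2 = (a - b)\<^sup>2 + 4 * c" by (rule real_sqrt_pow2)
  have "(rho c a b - a) * (rho c a b - b) = (?s ^ 2 - (a - b)\<^sup>2) / 4"
    unfolding rho_def by (simp add: field_simps power2_eq_square)
  thus ?thesis using s by simp
qed

lemma rho_gt: assumes "c > 0" shows "rho c a b > a" "rho c a b > b"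
proof -
  have "sqrt ((a - b)\<^sup>2 + 4 * c) > sqrt ((a - b)\<^sup>2)" using assms by (intro real_sqrt_less_mono) simp
  hence "sqrt ((a - b)\<^sup>2 + 4 * c) > \<bar>a - b\<bar>" by simp
  hence h: "a - b < sqrt ((a - b)\<^sup>2 + 4 * c)" "b - a < sqrt ((a - b)\<^sup>2 + 4 * c)" by (simp_all add: abs_less_iff)
  show "rho c a b > a" using h(1) unfolding rho_def by (simp add: field_simps)
  show "rho c a b > b" using h(2) unfolding rho_def by (simp add: field_simps)
qed

lemma rho_sym: "rho c a b = rho c b a"
  unfolding rho_def by (simp add: power2_commute add.commute)

lemma quad_roots:
  fixes l :: complex
  assumes c: "c > 0" and ab: "a + b \<ge> 0"
    and eq: "(l - complex_of_real a) * (l - complex_of_real b) = complex_of_real c"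
  shows "cmod l \<le> rho c a b"
proof -
  define s where "s = sqrt ((a - b)\<^sup>2 + 4 * c)"
  have "0 \<le> (a - b)\<^sup>2" by simp
  have nn: "0 \<le> (a - b)\<^sup>2 + 4 * c" using c by (intro add_nonneg_nonneg) auto
  hence s2: "s ^ 2 = (a - b)\<^sup>2 + 4 * c" unfolding s_def by (rule real_sqrt_pow2)
  have s0: "s \<ge> 0" unfolding s_def using nn by simp
  define r1 where "r1 = (a + b + s) / 2"
  define r2 where "r2 = (a + b - s) / 2"
  have sum: "r1 + r2 = a + b" unfolding r1_def r2_def by (simp add: field_simps)
  have prod: "r1 * r2 = a * b - c" unfolding r1_def r2_def using s2
    by (simp add: field_simps power2_eq_square)
  have "(l - complex_of_real r1) * (l - complex_of_real r2)
      = l * l - complex_of_real (r1 + r2) * l + complex_of_real (r1 * r2)"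
    by (simp add: algebra_simps)
  also have "\<dots> = l * l - complex_of_real (a + b) * l + complex_of_real (a * b - c)"
    using sum prod by simp
  also have "\<dots> = (l - complex_of_real a) * (l - complex_of_real b) - complex_of_real c"
    by (simp add: algebra_simps)
  also have "\<dots> = 0" using eq by simp
  finally have "l = complex_of_real r1 \<or> l = complex_of_real r2" by simp
  moreover have "r1 = rho c a b" unfolding r1_def rho_def s_def ..
  moreover have "\<bar>r2\<bar> \<le> r1" unfolding r1_def r2_def using s0 ab by (simp add: abs_le_iff)
  moreover have "\<bar>r1\<bar> \<le> r1" unfolding r1_def using s0 ab by simp
  ultimately show ?thesis by auto
qed


lemma rad2:
  assumes f: "\<forall>i<N. f i \<in> carrier_vec n" and g: "\<forall>i<N. g i \<in> carrier_vec n"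
    and i: "i < N" and j: "j < N" and ij: "i \<noteq> j" and n: "n > 0"
    and ai: "cinner (g i) (f i) = complex_of_real ai" and ai0: "ai \<ge> 0"
    and aj: "cinner (g j) (f j) = complex_of_real aj" and aj0: "aj \<ge> 0"
    and qi: "q i > 0" and qj: "q j > 0" and c: "c > 0"
    and hc: "complex_of_real (q i * q j) * cinner (g j) (f i) * cinner (g i) (f j) = complex_of_real c"
  shows "spectral_radius (synthesis_op n N g * Dm N q {i, j} * analysis_op n N f) = rho c (q i * ai) (q j * aj)"
proof (rule sr_eq[OF T_carrier n])
  let ?T = "synthesis_op n N g * Dm N q {i, j} * analysis_op n N f"
  define \<alpha> where "\<alpha> = q i * ai"
  define \<beta> where "\<beta> = q j * aj"
  define \<rho> where "\<rho> = rho c \<alpha> \<beta>"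
  define bij where "bij = cinner (g j) (f i)"
  define bji where "bji = cinner (g i) (f j)"
  have hc': "complex_of_real (q i) * complex_of_real (q j) * bij * bji = complex_of_real c"
    using hc unfolding bij_def bji_def by simp
  have bij0: "bij \<noteq> 0" and bji0: "bji \<noteq> 0" using hc' c by auto
  have gi: "g i \<in> carrier_vec n" and fi: "f i \<in> carrier_vec n" using f g i by auto
  have gj: "g j \<in> carrier_vec n" and fj: "f j \<in> carrier_vec n" using f g j by auto
  have rgt: "\<rho> > \<alpha>" "\<rho> > \<beta>" unfolding \<rho>_def using rho_gt[OF c] by auto
  have a0: "\<alpha> \<ge> 0" "\<beta> \<ge> 0" unfolding \<alpha>_def \<beta>_def using ai0 aj0 qi qj by auto
  have root: "(\<rho> - \<alpha>) * (\<rho> - \<beta>) = c" unfolding \<rho>_def by (rule rho_root[OF c])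
  show "rho c (q i * ai) (q j * aj) \<ge> 0" using rgt a0 unfolding \<rho>_def \<alpha>_def \<beta>_def by simp
  show "rho c (q i * ai) (q j * aj) = 0 \<or> eigenvalue ?T (complex_of_real (rho c (q i * ai) (q j * aj)))"
  proof -
    define y1 where "y1 = complex_of_real (q i) * bij"
    define y2 where "y2 = complex_of_real (\<rho> - \<alpha>)"
    define x where "x = y1 \<cdot>\<^sub>v g i + y2 \<cdot>\<^sub>v g j"
    have x: "x \<in> carrier_vec n" unfolding x_def using gi gj by simp
    have xi: "cinner x (f i) = y1 * complex_of_real ai + y2 * bij"
      unfolding x_def using gi gj by (simp add: cinner_add[of _ n] cinner_smult ai bij_def)
    have xj: "cinner x (f j) = y1 * bji + y2 * complex_of_real aj"
      unfolding x_def using gi gj by (simp add: cinner_add[of _ n] cinner_smult aj bji_def)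
    have e1: "complex_of_real (q i) * cinner x (f i) = complex_of_real \<rho> * y1"
    proof -
      have "complex_of_real (q i) * cinner x (f i) = complex_of_real (q i) * bij * (complex_of_real (q i * ai) + complex_of_real (\<rho> - \<alpha>))"
        unfolding xi y1_def y2_def by (simp add: algebra_simps)
      also have "\<dots> = complex_of_real (q i) * bij * complex_of_real \<rho>"
      proof -
        have "q i * ai + (\<rho> - \<alpha>) = \<rho>" unfolding \<alpha>_def by simp
        hence "complex_of_real (q i * ai) + complex_of_real (\<rho> - \<alpha>) = complex_of_real \<rho>"
          by (metis of_real_add)
        thus ?thesis by simp
      qed
      finally show ?thesis unfolding y1_def by (simp add: algebra_simps)
    qed
    have e2: "complex_of_real (q j) * cinner x (f j) = complex_of_real \<rho> * y2"
    proof -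
      have "complex_of_real (q j) * cinner x (f j) = complex_of_real (q i) * complex_of_real (q j) * bij * bji + complex_of_real (\<beta> * (\<rho> - \<alpha>))"
        unfolding xj y1_def y2_def \<beta>_def by (simp add: algebra_simps)
      also have "\<dots> = complex_of_real (c + \<beta> * (\<rho> - \<alpha>))" using hc' by simp
      also have "c + \<beta> * (\<rho> - \<alpha>) = \<rho> * (\<rho> - \<alpha>)" using root by (simp add: algebra_simps)
      finally show ?thesis unfolding y2_def by simp
    qed
    have "?T *\<^sub>v x = (complex_of_real (q i) * cinner x (f i)) \<cdot>\<^sub>v g i + (complex_of_real (q j) * cinner x (f j)) \<cdot>\<^sub>v g j"
      by (rule T_apply2[OF f g i j ij x])
    also have "\<dots> = (complex_of_real \<rho> * y1) \<cdot>\<^sub>v g i + (complex_of_real \<rho> * y2) \<cdot>\<^sub>v g j"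
      by (simp only: e1 e2)
    also have "\<dots> = complex_of_real \<rho> \<cdot>\<^sub>v x"
      unfolding x_def using gi gj by (simp add: smult_add_distrib_vec smult_smult_assoc)
    finally have Tx: "?T *\<^sub>v x = complex_of_real \<rho> \<cdot>\<^sub>v x" .
    have "x \<noteq> 0\<^sub>v n"
    proof
      assume "x = 0\<^sub>v n"
      hence "cinner x (f i) = 0" by (simp add: cinner_zero)
      hence "complex_of_real \<rho> * y1 = 0" using e1 by simp
      thus False using rgt a0 bij0 qi unfolding y1_def by simp
    qed
    hence "eigenvector ?T x (complex_of_real \<rho>)"
      using x Tx T_carrier[of n N g q "{i,j}" f] unfolding eigenvector_def by auto
    thus ?thesis unfolding eigenvalue_def \<rho>_def \<alpha>_def \<beta>_def by blast
  qed
  fix l assume ev: "eigenvalue ?T l" and l0: "l \<noteq> 0"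
  then obtain v where v: "v \<in> carrier_vec n" "v \<noteq> 0\<^sub>v n" "?T *\<^sub>v v = l \<cdot>\<^sub>v v"
    unfolding eigenvalue_def eigenvector_def using T_carrier[of n N g q "{i,j}" f] by auto
  define z1 where "z1 = cinner v (f i)"
  define z2 where "z2 = cinner v (f j)"
  have eq: "l \<cdot>\<^sub>v v = (complex_of_real (q i) * z1) \<cdot>\<^sub>v g i + (complex_of_real (q j) * z2) \<cdot>\<^sub>v g j"
    using v(3) T_apply2[OF f g i j ij v(1)] unfolding z1_def z2_def by simp
  have l1: "l * z1 = complex_of_real (q i) * z1 * complex_of_real ai + complex_of_real (q j) * z2 * bij"
    using arg_cong[OF eq, of "\<lambda>w. cinner w (f i)"] gi gj
    by (simp add: cinner_add[of _ n] cinner_smult ai bij_def z1_def)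
  have l2: "l * z2 = complex_of_real (q i) * z1 * bji + complex_of_real (q j) * z2 * complex_of_real aj"
    using arg_cong[OF eq, of "\<lambda>w. cinner w (f j)"] gi gj
    by (simp add: cinner_add[of _ n] cinner_smult aj bji_def z2_def)
  define y1 where "y1 = complex_of_real (q i) * z1"
  define y2 where "y2 = complex_of_real (q j) * z2"
  have m1: "(l - complex_of_real \<alpha>) * y1 = complex_of_real (q i) * bij * y2"
  proof -
    have "complex_of_real (q i) * (l * z1) = complex_of_real (q i) * (complex_of_real (q i) * z1 * complex_of_real ai + complex_of_real (q j) * z2 * bij)"
      using l1 by simp
    thus ?thesis unfolding y1_def y2_def \<alpha>_def by (simp add: algebra_simps)
  qed
  have m2: "(l - complex_of_real \<beta>) * y2 = complex_of_real (q j) * bji * y1"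
  proof -
    have "complex_of_real (q j) * (l * z2) = complex_of_real (q j) * (complex_of_real (q i) * z1 * bji + complex_of_real (q j) * z2 * complex_of_real aj)"
      using l2 by simp
    thus ?thesis unfolding y1_def y2_def \<beta>_def by (simp add: algebra_simps)
  qed
  have ny: "y1 \<noteq> 0 \<or> y2 \<noteq> 0"
  proof (rule ccontr)
    assume "\<not> (y1 \<noteq> 0 \<or> y2 \<noteq> 0)"
    hence "z1 = 0" "z2 = 0" unfolding y1_def y2_def using qi qj by auto
    hence "l \<cdot>\<^sub>v v = 0\<^sub>v n" using eq gi gj by auto
    thus False using smult_zero_imp[OF l0 v(1)] v(2) by simp
  qed
  have y1n: "y1 \<noteq> 0"
  proof
    assume "y1 = 0"
    hence "y2 \<noteq> 0" using ny by simp
    moreover have "complex_of_real (q i) * bij * y2 = 0" using m1 \<open>y1 = 0\<close> by simp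
    ultimately show False using qi bij0 by simp
  qed
  have y2n: "y2 \<noteq> 0"
  proof
    assume "y2 = 0"
    moreover have "complex_of_real (q j) * bji * y1 = 0" using m2 \<open>y2 = 0\<close> by simp
    ultimately show False using qj bji0 y1n by simp
  qed
  have "(l - complex_of_real \<alpha>) * (l - complex_of_real \<beta>) * (y1 * y2) = complex_of_real c * (y1 * y2)"
  proof -
    have "(l - complex_of_real \<alpha>) * (l - complex_of_real \<beta>) * (y1 * y2) = ((l - complex_of_real \<alpha>) * y1) * ((l - complex_of_real \<beta>) * y2)"
      by (simp add: algebra_simps)
    also have "\<dots> = (complex_of_real (q i) * complex_of_real (q j) * bij * bji) * (y1 * y2)"
      unfolding m1 m2 by (simp add: algebra_simps)
    finally show ?thesis using hc' by simp
  qed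
  hence "(l - complex_of_real \<alpha>) * (l - complex_of_real \<beta>) = complex_of_real c"
    using y1n y2n by simp
  from quad_roots[OF c _ this] a0 show "cmod l \<le> rho c (q i * ai) (q j * aj)"
    unfolding \<alpha>_def \<beta>_def by simp
qed



lemma rho_mono1:
  assumes c: "c > 0" and le: "a \<le> a'"
  shows "rho c a b \<le> rho c a' b"
proof -
  define s where "s = sqrt ((a - b)\<^sup>2 + 4 * c)"
  define s' where "s' = sqrt ((a' - b)\<^sup>2 + 4 * c)"
  define d where "d = a' - a"
  have d0: "d \<ge> 0" using le unfolding d_def by simp
  have gt: "rho c a' b > b" using rho_gt[OF c] by blast
  hence "s' > b - a'" unfolding rho_def s'_def by (simp add: field_simps)
  have nn: "0 \<le> (a' - b)\<^sup>2 + 4 * c" using c by (intro add_nonneg_nonneg) auto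
  hence s'2: "s' ^ 2 = (a' - b)\<^sup>2 + 4 * c" unfolding s'_def by (rule real_sqrt_pow2)
  have s'0: "s' \<ge> 0" unfolding s'_def using nn by simp
  have "(a - b)\<^sup>2 + 4 * c \<le> (s' + d)\<^sup>2"
  proof -
    have "(s' + d)\<^sup>2 - ((a - b)\<^sup>2 + 4 * c) = 2 * d * (s' + (a' - b))"
      using s'2 unfolding d_def by (simp add: power2_eq_square algebra_simps)
    moreover have "2 * d * (s' + (a' - b)) \<ge> 0" using d0 \<open>s' > b - a'\<close> by simp
    ultimately show ?thesis by simp
  qed
  hence "s \<le> sqrt ((s' + d)\<^sup>2)" unfolding s_def by (rule real_sqrt_le_mono)
  also have "\<dots> = s' + d" using s'0 d0 by simp
  finally have "s \<le> s' + d" .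
  thus ?thesis unfolding rho_def s_def[symmetric] s'_def[symmetric] d_def by simp
qed

lemma rho_mono:
  assumes c: "c > 0" and "a \<le> a'" "b \<le> b'"
  shows "rho c a b \<le> rho c a' b'"
proof -
  have "rho c a b \<le> rho c a' b" by (rule rho_mono1[OF c assms(2)])
  also have "\<dots> = rho c b a'" by (rule rho_sym)
  also have "\<dots> \<le> rho c b' a'" by (rule rho_mono1[OF c assms(3)])
  also have "\<dots> = rho c a' b'" by (rule rho_sym)
  finally show ?thesis .
qed

lemma Dset_eq: "Dset N q m = {Dm N q L | L. L \<subseteq> {..<N} \<and> card L = m}"
  unfolding Dset_def Dm_def ..


lemma card1_iff: "L \<subseteq> {..<N} \<and> card L = 1 \<longleftrightarrow> (\<exists>i. i < N \<and> L = {i})"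
  by (auto simp: card_1_singleton_iff)

lemma card2_iff: "L \<subseteq> {..<N} \<and> card L = 2 \<longleftrightarrow> (\<exists>i j. i < N \<and> j < N \<and> i \<noteq> j \<and> L = {i, j})"
  by (auto simp: card_2_iff)

theorem theorem3p2:
  fixes n N :: nat and f g :: "nat \<Rightarrow> complex vec" and q :: "nat \<Rightarrow> real" and c :: real
    and \<zeta> :: "nat set"
  assumes hN: "N \<ge> max n 2"
    and hF: "is_frame n N f"
    and hq: "weight_numbers n N q"
    and hG: "is_dual n N f g"
    and h1: "\<forall>i<N. Im (cinner (g i) (f i)) = 0 \<and> Re (cinner (g i) (f i)) \<ge> 0"
    and hc: "c > 0"
    and h2: "\<forall>i<N. \<forall>j<N. i \<noteq> j \<longrightarrow>
               complex_of_real (q i * q j) * cinner (g j) (f i) * cinner (g i) (f j) = complex_of_real c"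
    and h\<zeta>: "\<zeta> = {i. i < N \<and> complex_of_real (q i) * cinner (g i) (f i) = complex_of_real (Rmp n N q 1 f g)}"
  shows "(card \<zeta> = 1 \<longrightarrow>
            Rmp n N q 2 f g =
              (let R1 = Rmp n N q 1 f g;
                   M = Max {q i * Re (cinner (g i) (f i)) | i. i < N \<and> i \<notin> \<zeta>}
               in (R1 + M + sqrt ((R1 - M)\<^sup>2 + 4 * c)) / 2))
       \<and> (card \<zeta> > 1 \<longrightarrow> Rmp n N q 2 f g = Rmp n N q 1 f g + sqrt c)"
proof -
  have f: "\<forall>i<N. f i \<in> carrier_vec n" using hF unfolding is_frame_def by blast
  have g: "\<forall>i<N. g i \<in> carrier_vec n" using hG unfolding is_dual_def is_frame_def by blast
  have n: "n > 0" using hq unfolding weight_numbers_def by simp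
  have N2: "N \<ge> 2" using hN by simp
  have qpos: "q i > 0" if i: "i < N" for i
  proof -
    from hq obtain p where p: "prob_seq N p" and pq: "\<forall>i<N. (\<Sum>j<N. p j) - p i \<noteq> 0 \<and>
        q i = (\<Sum>j<N. p j) / ((\<Sum>j<N. p j) - p i) * (real N - 1) / real n"
      unfolding weight_numbers_def by blast
    have s1: "(\<Sum>j<N. p j) = 1" and pi: "p i \<le> 1" using p i unfolding prob_seq_def by auto
    have "1 - p i \<noteq> 0" using pq i s1 by auto
    hence "1 - p i > 0" using pi by simp
    moreover have "real N - 1 > 0" using N2 by simp
    ultimately show ?thesis using pq i s1 n by simp
  qed
  define a where "a i = Re (cinner (g i) (f i))" for i
  define \<alpha> where "\<alpha> i = q i * Re (cinner (g i) (f i))" for i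
  have ca: "cinner (g i) (f i) = complex_of_real (a i)" if "i < N" for i
    using h1 that unfolding a_def by (simp add: complex_eq_iff)
  have a0: "a i \<ge> 0" if "i < N" for i using h1 that unfolding a_def by simp
  have \<alpha>a: "\<alpha> i = q i * a i" for i unfolding \<alpha>_def a_def ..
  have \<alpha>0: "\<alpha> i \<ge> 0" if "i < N" for i using a0[OF that] qpos[OF that] unfolding \<alpha>a by simp
  let ?S = "synthesis_op n N g" and ?A = "analysis_op n N f"
  have set1: "{spectral_radius (?S * D * ?A) | D. D \<in> Dset N q 1} = \<alpha> ` {..<N}"
  proof -
    have "{spectral_radius (?S * D * ?A) | D. D \<in> Dset N q 1}
        = {spectral_radius (?S * Dm N q {i} * ?A) | i. i < N}"
      unfolding Dset_eq card1_iff by blast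
    also have "\<dots> = \<alpha> ` {..<N}"
    proof -
      have "spectral_radius (?S * Dm N q {i} * ?A) = \<alpha> i" if "i < N" for i
        using rad1[where q=q, OF f g that n ca[OF that] a0[OF that] qpos[OF that]] unfolding \<alpha>a .
      thus ?thesis by force
    qed
    finally show ?thesis .
  qed
  have set2: "{spectral_radius (?S * D * ?A) | D. D \<in> Dset N q 2}
      = {rho c (\<alpha> i) (\<alpha> j) | i j. i < N \<and> j < N \<and> i \<noteq> j}"
  proof -
    have "{spectral_radius (?S * D * ?A) | D. D \<in> Dset N q 2}
        = {spectral_radius (?S * Dm N q {i, j} * ?A) | i j. i < N \<and> j < N \<and> i \<noteq> j}"
      unfolding Dset_eq card2_iff by blast
    also have "\<dots> = {rho c (\<alpha> i) (\<alpha> j) | i j. i < N \<and> j < N \<and> i \<noteq> j}"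
    proof -
      have "spectral_radius (?S * Dm N q {i, j} * ?A) = rho c (\<alpha> i) (\<alpha> j)"
        if "i < N" "j < N" "i \<noteq> j" for i j
        using rad2[where q=q, OF f g that n ca[OF that(1)] a0[OF that(1)] ca[OF that(2)] a0[OF that(2)]
            qpos[OF that(1)] qpos[OF that(2)] hc] h2 that unfolding \<alpha>a by blast
      thus ?thesis by (metis (no_types, opaque_lifting))
    qed
    finally show ?thesis .
  qed
  define R1 where "R1 = Rmp n N q 1 f g"
  have R1: "R1 = Max (\<alpha> ` {..<N})" unfolding R1_def Rmp_def set1 ..
  have fin1: "finite (\<alpha> ` {..<N})" and ne1: "\<alpha> ` {..<N} \<noteq> {}" using N2 by (auto simp: lessThan_empty_iff)
  have R1ge: "\<alpha> i \<le> R1" if "i < N" for i unfolding R1 using fin1 that by auto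
  obtain k where k: "k < N" "\<alpha> k = R1" using Max_in[OF fin1 ne1] unfolding R1 by auto
  have \<zeta>: "\<zeta> = {i. i < N \<and> \<alpha> i = R1}"
  proof -
    have "complex_of_real (q i) * cinner (g i) (f i) = complex_of_real (\<alpha> i)" if "i < N" for i
      using ca[OF that] unfolding \<alpha>a by simp
    thus ?thesis unfolding h\<zeta> R1_def by auto
  qed
  define B where "B = {rho c (\<alpha> i) (\<alpha> j) | i j. i < N \<and> j < N \<and> i \<noteq> j}"
  have R2: "Rmp n N q 2 f g = Max B" unfolding Rmp_def set2 B_def ..
  have finB: "finite B"
  proof -
    have "B \<subseteq> (\<lambda>p. rho c (\<alpha> (fst p)) (\<alpha> (snd p))) ` ({..<N} \<times> {..<N})"
    proof
      fix y assume "y \<in> B"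
      then obtain i j where ij: "i < N" "j < N" "y = rho c (\<alpha> i) (\<alpha> j)" unfolding B_def by blast
      show "y \<in> (\<lambda>p. rho c (\<alpha> (fst p)) (\<alpha> (snd p))) ` ({..<N} \<times> {..<N})"
        by (rule image_eqI[of _ _ "(i, j)"]) (use ij in simp_all)
    qed
    thus ?thesis by (rule finite_subset) simp
  qed
  show ?thesis
  proof (intro conjI impI)
    assume "card \<zeta> = 1"
    then obtain k' where kz: "\<zeta> = {k'}" by (auto simp: card_1_singleton_iff)
    hence kk: "k' < N" "\<alpha> k' = R1" and oth: "\<And>i. i < N \<Longrightarrow> i \<noteq> k' \<Longrightarrow> \<alpha> i \<noteq> R1"
      unfolding \<zeta> by auto
    define C where "C = {q i * Re (cinner (g i) (f i)) | i. i < N \<and> i \<notin> \<zeta>}"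
    have C: "C = \<alpha> ` {i. i < N \<and> i \<noteq> k'}" unfolding C_def \<alpha>_def kz by auto
    have finC: "finite C" unfolding C by simp
    obtain w where w: "w < N" "w \<noteq> k'"
    proof (cases "k' = 0")
      case True thus ?thesis using that[of 1] N2 by simp
    next
      case False thus ?thesis using that[of 0] N2 by simp
    qed
    have neC: "C \<noteq> {}" unfolding C using w by auto
    define M where "M = Max C"
    have Mge: "\<alpha> i \<le> M" if "i < N" "i \<noteq> k'" for i unfolding M_def C using finC that C by auto
    obtain m where m: "m < N" "m \<noteq> k'" "\<alpha> m = M" using Max_in[OF finC neC] unfolding M_def C by auto
    have "Max B = rho c R1 M"
    proof (rule Max_eqI[OF finB])
      show "rho c R1 M \<in> B" unfolding B_def
        by (rule CollectI, rule exI[of _ k'], rule exI[of _ m]) (use kk m in auto)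
      fix y assume "y \<in> B"
      then obtain i j where ij: "i < N" "j < N" "i \<noteq> j" "y = rho c (\<alpha> i) (\<alpha> j)" unfolding B_def by auto
      show "y \<le> rho c R1 M"
      proof (cases "j = k'")
        case True
        hence "i \<noteq> k'" using ij by simp
        have "y = rho c (\<alpha> j) (\<alpha> i)" using ij rho_sym by simp
        also have "\<dots> \<le> rho c R1 M" using rho_mono[OF hc R1ge[OF ij(2)] Mge[OF ij(1) \<open>i \<noteq> k'\<close>]] .
        finally show ?thesis .
      next
        case False
        show ?thesis unfolding ij(4) using rho_mono[OF hc R1ge[OF ij(1)] Mge[OF ij(2) False]] .
      qed
    qed
    thus "Rmp n N q 2 f g = (let R1 = Rmp n N q 1 f g;
                   M = Max {q i * Re (cinner (g i) (f i)) | i. i < N \<and> i \<notin> \<zeta>}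
               in (R1 + M + sqrt ((R1 - M)\<^sup>2 + 4 * c)) / 2)"
      unfolding R2 Let_def R1_def[symmetric] C_def[symmetric] M_def[symmetric] rho_def .
  next
    assume "card \<zeta> > 1"
    have finz: "finite \<zeta>"
    proof (rule ccontr)
      assume "infinite \<zeta>" hence "card \<zeta> = 0" by simp
      thus False using \<open>card \<zeta> > 1\<close> by simp
    qed
    have "\<zeta> \<noteq> {}"
    proof
      assume "\<zeta> = {}" thus False using \<open>card \<zeta> > 1\<close> by simp
    qed
    then obtain k1 where k1: "k1 \<in> \<zeta>" by blast
    have "card (\<zeta> - {k1}) > 0" using \<open>card \<zeta> > 1\<close> k1 finz by simp
    have "\<zeta> - {k1} \<noteq> {}"
    proof
      assume E: "\<zeta> - {k1} = {}"
      have "card (\<zeta> - {k1}) = 0" by (simp only: E card.empty)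
      thus False using \<open>card (\<zeta> - {k1}) > 0\<close> by simp
    qed
    then obtain k2 where k2: "k2 \<in> \<zeta>" "k2 \<noteq> k1" by blast
    have "Max B = rho c R1 R1"
    proof (rule Max_eqI[OF finB])
      show "rho c R1 R1 \<in> B" unfolding B_def
        by (rule CollectI, rule exI[of _ k1], rule exI[of _ k2]) (use k1 k2 in \<open>auto simp: \<zeta>\<close>)
      fix y assume "y \<in> B"
      then obtain i j where ij: "i < N" "j < N" "i \<noteq> j" "y = rho c (\<alpha> i) (\<alpha> j)" unfolding B_def by auto
      show "y \<le> rho c R1 R1" unfolding ij(4) using rho_mono[OF hc R1ge[OF ij(1)] R1ge[OF ij(2)]] .
    qed
    moreover have "rho c R1 R1 = R1 + sqrt c"
    proof -
      have "sqrt (4 * c) = 2 * sqrt c" by (simp add: real_sqrt_mult)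
      thus ?thesis unfolding rho_def by simp
    qed
    ultimately show "Rmp n N q 2 f g = Rmp n N q 1 f g + sqrt c" unfolding R2 R1_def by simp
  qed
qed


end
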